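(* Let $G$ be a finite group. Then the deep commuting graph $\Delta_D(G)$ is complete if and only if $G$ is cyclic.
   Context: For a finite group $G$, let $M(G)$ denote its Schur multiplier. A Schur cover of $G$ is a group $\tilde{G}$ with a central extension $\{e\}\to M(G)\xrightarrow{\iota}\tilde{G}\xrightarrow{\pi}G\to\{e\}$ such that $\iota(M(G))\subseteq Z(\tilde{G})\cap[\tilde{G},\tilde{G}]$ (a stem extension) and $\tilde G$ has the maximal possible order among such stem extensions. The deep commuting graph $\Delta_D(G)$ is the simple graph with vertex set $G$ in which two distinct vertices $x,y$ are adjacent if and only if preimages of $x$ and $y$ under $\pi$ commute in $\tilde{G}$; this does not depend on the choice of Schur cover or of the preimages. *)

theory Defs
  imports "HOL-Algebra.Algebra"
begin

definition group_center :: "('b, 'm) monoid_scheme \<Rightarrow> 'b set" where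
  "group_center H = {z \<in> carrier H. \<forall>h \<in> carrier H. z \<otimes>\<^bsub>H\<^esub> h = h \<otimes>\<^bsub>H\<^esub> z}"

definition stem_extension ::
  "('a, 'm) monoid_scheme \<Rightarrow> ('b, 'n) monoid_scheme \<Rightarrow> ('b \<Rightarrow> 'a) \<Rightarrow> bool" where
  "stem_extension G H f \<longleftrightarrow>
     group H \<and> f \<in> hom H G \<and> f ` carrier H = carrier G \<and>
     kernel H G f \<subseteq> group_center H \<inter> derived H (carrier H)"

text \<open>Competing extensions are taken with carrier in type nat (every finite group has an
  isomorphic copy there, and stem extensions of finite groups are finite; infinite ones
  have card 0 anyway).\<close>
definition schur_cover ::
  "('a, 'm) monoid_scheme \<Rightarrow> ('b, 'n) monoid_scheme \<Rightarrow> ('b \<Rightarrow> 'a) \<Rightarrow> bool" where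
  "schur_cover G H f \<longleftrightarrow>
     stem_extension G H f \<and> finite (carrier H) \<and>
     (\<forall>(H' :: nat monoid) f'. stem_extension G H' f' \<longrightarrow>
        card (carrier H') \<le> card (carrier H))"

definition deep_commuting_adj ::
  "('a, 'm) monoid_scheme \<Rightarrow> ('b, 'n) monoid_scheme \<Rightarrow> ('b \<Rightarrow> 'a) \<Rightarrow> 'a \<Rightarrow> 'a \<Rightarrow> bool" where
  "deep_commuting_adj G H f x y \<longleftrightarrow>
     x \<in> carrier G \<and> y \<in> carrier G \<and> x \<noteq> y \<and>
     (\<forall>a \<in> carrier H. \<forall>b \<in> carrier H. f a = x \<longrightarrow> f b = y \<longrightarrow>
        a \<otimes>\<^bsub>H\<^esub> b = b \<otimes>\<^bsub>H\<^esub> a)"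

definition deep_commuting_graph_complete ::
  "('a, 'm) monoid_scheme \<Rightarrow> ('b, 'n) monoid_scheme \<Rightarrow> ('b \<Rightarrow> 'a) \<Rightarrow> bool" where
  "deep_commuting_graph_complete G H f \<longleftrightarrow>
     (\<forall>x \<in> carrier G. \<forall>y \<in> carrier G. x \<noteq> y \<longrightarrow> deep_commuting_adj G H f x y)"

end

theory Submission
  imports Defs
begin


definition chars_ok :: "('a,'m) monoid_scheme \<Rightarrow> bool" where
 "chars_ok G \<longleftrightarrow> (\<exists>(q::int) \<phi> \<psi> x y. q > 1 \<and> x \<in> carrier G \<and> y \<in> carrier G \<and>
   (\<forall>g\<in>carrier G. \<forall>h\<in>carrier G. \<phi> (g \<otimes>\<^bsub>G\<^esub> h) mod q = (\<phi> g + \<phi> h) mod q \<and>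
        \<psi> (g \<otimes>\<^bsub>G\<^esub> h) mod q = (\<psi> g + \<psi> h) mod q) \<and>
   \<phi> x mod q = 1 \<and> \<psi> x mod q = 0 \<and> \<phi> y mod q = 0 \<and> \<psi> y mod q = 1)"

context comm_group begin

lemma key_B:
  assumes N: "subgroup N G" and a: "a \<in> carrier G" and z: "z \<in> carrier G"
    and q: "Factorial_Ring.prime (q::int)" and zq: "z [^] q \<in> N"
    and notA: "\<not>(\<exists>i::int. \<exists>n\<in>N. z = a [^] i \<otimes> n)"
    and j: "z [^] (j::int) = a [^] (i::int) \<otimes> n" "n \<in> N"
  shows "q dvd j"
proof (rule ccontr)
  assume "\<not> q dvd j"
  then have "coprime q j" using q by (simp add: prime_imp_coprime)
  then have "gcd j q = 1" by (metis coprime_iff_gcd_eq_1 gcd.commute)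
  then obtain u v where uv: "u * j + v * q = 1" using bezout_int[of j q] by auto
  have nG: "n \<in> carrier G" using N j(2) by (meson subgroup.mem_carrier)
  have "z = z [^] (u * j + v * q)" using z by (simp only: uv int_pow_1)
  also have "\<dots> = (z [^] j) [^] u \<otimes> (z [^] q) [^] v"
    using z by (simp add: int_pow_mult int_pow_pow mult.commute)
  also have "\<dots> = (a [^] i \<otimes> n) [^] u \<otimes> (z [^] q) [^] v"
    using j(1) by simp
  also have "\<dots> = a [^] (i*u) \<otimes> (n [^] u \<otimes> (z [^] q) [^] v)"
    using a nG z by (simp add: int_pow_distrib int_pow_pow m_assoc)
  finally have "z = a [^] (i*u) \<otimes> (n [^] u \<otimes> (z [^] q) [^] v)" .
  moreover have "n [^] u \<otimes> (z [^] q) [^] v \<in> N"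
    using N j(2) zq by (simp add: subgroup.m_closed subgroup_int_pow_closed)
  ultimately show False using notA by blast
qed


lemma pair_mult:
  "b \<in> carrier G \<Longrightarrow> n \<in> carrier G \<Longrightarrow> n' \<in> carrier G \<Longrightarrow>
   (b [^] (e::int) \<otimes> n) \<otimes> (b [^] (e'::int) \<otimes> n') = b [^] (e + e') \<otimes> (n \<otimes> n')"
  by (simp add: int_pow_mult m_ac)

lemma pair_inv:
  "b \<in> carrier G \<Longrightarrow> n \<in> carrier G \<Longrightarrow> inv (b [^] (e::int) \<otimes> n) = b [^] (- e) \<otimes> inv n"
  by (simp add: inv_mult int_pow_neg)

lemma pair_pow:
  "b \<in> carrier G \<Longrightarrow> n \<in> carrier G \<Longrightarrow> (b [^] (e::int) \<otimes> n) [^] (s::int) = b [^] (e * s) \<otimes> n [^] s"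
  by (simp add: int_pow_distrib int_pow_pow)

lemma tri_mult:
  "a \<in> carrier G \<Longrightarrow> z \<in> carrier G \<Longrightarrow> n \<in> carrier G \<Longrightarrow> n' \<in> carrier G \<Longrightarrow>
   (a [^] (i::int) \<otimes> z [^] (j::int) \<otimes> n) \<otimes> (a [^] (i'::int) \<otimes> z [^] (j'::int) \<otimes> n')
   = a [^] (i + i') \<otimes> z [^] (j + j') \<otimes> (n \<otimes> n')"
  by (simp add: int_pow_mult m_ac)

lemma tri_inv:
  "a \<in> carrier G \<Longrightarrow> z \<in> carrier G \<Longrightarrow> n \<in> carrier G \<Longrightarrow>
   inv (a [^] (i::int) \<otimes> z [^] (j::int) \<otimes> n) = a [^] (- i) \<otimes> z [^] (- j) \<otimes> inv n"
  by (simp add: inv_mult int_pow_neg)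

lemma key_uniq:
  assumes N: "subgroup N G" and a: "a \<in> carrier G" and z: "z \<in> carrier G"
    and q: "Factorial_Ring.prime (q::int)" and zq: "z [^] q \<in> N"
    and notA: "\<not>(\<exists>i::int. \<exists>n\<in>N. z = a [^] i \<otimes> n)"
    and notC: "\<And>i::int. a [^] i \<in> N \<Longrightarrow> q dvd i"
    and e1: "g = a [^] (i::int) \<otimes> z [^] (j::int) \<otimes> n" "n \<in> N"
    and e2: "g = a [^] (i'::int) \<otimes> z [^] (j'::int) \<otimes> n'" "n' \<in> N"
  shows "q dvd (i - i') \<and> q dvd (j - j')"
proof -
  have nG: "n \<in> carrier G" "n' \<in> carrier G" using N e1(2) e2(2) by (meson subgroup.mem_carrier)+
  define d where "d = i - i'"
  define e where "e = j - j'"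
  define m where "m = n \<otimes> inv n'"
  have mN: "m \<in> N" unfolding m_def using N e1(2) e2(2) by (simp add: subgroup.m_closed subgroup.m_inv_closed)
  have mG: "m \<in> carrier G" using N mN by (meson subgroup.mem_carrier)
  have gG: "g \<in> carrier G" using e1 a z nG by simp
  have "\<one> = g \<otimes> inv g" using gG by simp
  also have "\<dots> = (a [^] i \<otimes> z [^] j \<otimes> n) \<otimes> (a [^] (- i') \<otimes> z [^] (- j') \<otimes> inv n')"
    using e1(1) e2(1) tri_inv a z nG by metis
  also have "\<dots> = a [^] d \<otimes> z [^] e \<otimes> m"
    unfolding d_def e_def m_def using tri_mult a z nG by simp
  finally have one: "a [^] d \<otimes> z [^] e \<otimes> m = \<one>" by simp
  have "z [^] e = a [^] (0::int) \<otimes> z [^] e \<otimes> \<one>" using a z by simp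
  also have "\<dots> = (a [^] d \<otimes> z [^] e \<otimes> m) \<otimes> (a [^] (- d) \<otimes> z [^] (0::int) \<otimes> inv m)"
    using tri_mult[of a z m "inv m" d e "-d" 0] a z mG by simp
  also have "\<dots> = a [^] (- d) \<otimes> inv m" using one a z mG by simp
  finally have ze: "z [^] e = a [^] (- d) \<otimes> inv m" .
  have qe: "q dvd e"
    using key_B[OF N a z q zq notA ze] N mN by (simp add: subgroup.m_inv_closed)
  then obtain t where t: "e = q * t" by (auto elim: dvdE)
  have zeN: "z [^] e \<in> N" using t zq N z by (simp add: int_pow_pow[symmetric] subgroup_int_pow_closed)
  have "a [^] d = a [^] d \<otimes> z [^] (0::int) \<otimes> \<one>" using a z by simp
  also have "\<dots> = (a [^] d \<otimes> z [^] e \<otimes> m) \<otimes> (a [^] (0::int) \<otimes> z [^] (- e) \<otimes> inv m)"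
    using tri_mult[of a z m "inv m" d e 0 "-e"] a z mG by simp
  also have "\<dots> = z [^] (- e) \<otimes> inv m" using one a z mG by simp
  finally have "a [^] d \<in> N" using N zeN mN
    by (simp add: int_pow_neg z subgroup.m_closed subgroup.m_inv_closed)
  then have "q dvd d" by (rule notC)
  then show ?thesis using qe d_def e_def by simp
qed


lemma key_chars:
  assumes N: "subgroup N G" and a: "a \<in> carrier G" and z: "z \<in> carrier G"
    and q: "Factorial_Ring.prime (q::int)" and zq: "z [^] q \<in> N"
    and notA: "\<not>(\<exists>i::int. \<exists>n\<in>N. z = a [^] i \<otimes> n)"
    and notC: "\<And>i::int. a [^] i \<in> N \<Longrightarrow> q dvd i"
    and rep: "\<And>g. g \<in> carrier G \<Longrightarrow> \<exists>(i::int) (j::int). \<exists>n\<in>N. g = a [^] i \<otimes> z [^] j \<otimes> n"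
  shows "chars_ok G"
proof -
  define R where "R g (p::int \<times> int) \<longleftrightarrow> (\<exists>n\<in>N. g = a [^] (fst p) \<otimes> z [^] (snd p) \<otimes> n)" for g p
  define \<phi> where "\<phi> g = fst (SOME p. R g p)" for g
  define \<psi> where "\<psi> g = snd (SOME p. R g p)" for g
  have Rphi: "R g (\<phi> g, \<psi> g)" if "g \<in> carrier G" for g
  proof -
    from rep[OF that] obtain i j :: int and n where "n \<in> N" "g = a [^] i \<otimes> z [^] j \<otimes> n" by blast
    then have "R g (i, j)" unfolding R_def by auto
    then have "R g (SOME p. R g p)" by (rule someI)
    then show ?thesis unfolding \<phi>_def \<psi>_def by simp
  qed
  have uniq: "q dvd (i - i') \<and> q dvd (j - j')" if "R g (i, j)" "R g (i', j')" for g i j i' j'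
  proof -
    from that obtain n n' where "n \<in> N" "g = a [^] i \<otimes> z [^] j \<otimes> n"
      "n' \<in> N" "g = a [^] i' \<otimes> z [^] j' \<otimes> n'" unfolding R_def by auto
    then show ?thesis using key_uniq[OF N a z q zq notA notC] by blast
  qed
  have q1: "q > 1" using q by (simp add: prime_gt_1_int)
  have mod1: "\<phi> g mod q = (\<phi> g' + \<phi> h) mod q \<and> \<psi> g mod q = (\<psi> g' + \<psi> h) mod q"
    if asm: "g \<in> carrier G" "g' \<in> carrier G" "h \<in> carrier G" "g = g' \<otimes> h" for g g' h
  proof -
    obtain n1 where n1: "n1 \<in> N" "g' = a [^] \<phi> g' \<otimes> z [^] \<psi> g' \<otimes> n1"
      using Rphi[OF asm(2)] unfolding R_def by auto
    obtain n2 where n2: "n2 \<in> N" "h = a [^] \<phi> h \<otimes> z [^] \<psi> h \<otimes> n2"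
      using Rphi[OF asm(3)] unfolding R_def by auto
    have "g = a [^] (\<phi> g' + \<phi> h) \<otimes> z [^] (\<psi> g' + \<psi> h) \<otimes> (n1 \<otimes> n2)"
      using asm(4) n1(2) n2(2) tri_mult[OF a z, of n1 n2] N n1(1) n2(1) subgroup.mem_carrier by metis
    then have "R g (\<phi> g' + \<phi> h, \<psi> g' + \<psi> h)"
      unfolding R_def using n1 n2 N by (auto intro: subgroup.m_closed)
    from uniq[OF Rphi[OF asm(1)] this] show ?thesis
      by (simp add: mod_eq_dvd_iff)
  qed
  have Ra: "R a (1, 0)" unfolding R_def using a z N by (auto intro!: bexI[of _ \<one>] subgroup.one_closed)
  have Rz: "R z (0, 1)" unfolding R_def using a z N by (auto intro!: bexI[of _ \<one>] subgroup.one_closed)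
  have 11: "1 mod q = 1" using q1 by simp
  have "q dvd \<phi> a - 1 \<and> q dvd \<psi> a - 0" using uniq[OF Rphi[OF a] Ra] .
  then have A: "\<phi> a mod q = 1" "\<psi> a mod q = 0"
    by (metis 11 mod_eq_dvd_iff, simp)
  have "q dvd \<phi> z - 0 \<and> q dvd \<psi> z - 1" using uniq[OF Rphi[OF z] Rz] .
  then have Z: "\<phi> z mod q = 0" "\<psi> z mod q = 1"
    by (simp, metis 11 mod_eq_dvd_iff)
  show ?thesis unfolding chars_ok_def
    apply (rule exI[of _ q], rule exI[of _ \<phi>], rule exI[of _ \<psi>], rule exI[of _ a], rule exI[of _ z])
    using q1 a z A Z mod1[of "g \<otimes> h" g h for g h] by simp
qed


lemma cancel3:
  assumes "x \<in> carrier G" "y \<in> carrier G" "w \<in> carrier G"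
  shows "x \<otimes> y \<otimes> (inv x \<otimes> w) = y \<otimes> w"
proof -
  have "x \<otimes> y \<otimes> (inv x \<otimes> w) = y \<otimes> x \<otimes> (inv x \<otimes> w)"
    using assms by (simp add: m_comm[of x y])
  also have "\<dots> = y \<otimes> (x \<otimes> (inv x \<otimes> w))"
    by (rule m_assoc) (simp_all add: assms)
  also have "\<dots> = y \<otimes> w" using assms by (simp add: m_assoc[symmetric])
  finally show ?thesis .
qed

lemma key_A:
  assumes N: "subgroup N G" and a: "a \<in> carrier G" and z: "z \<in> carrier G"
    and notcyc: "\<not>(\<exists>b\<in>carrier G. \<forall>g\<in>carrier G. \<exists>i::int. \<exists>n\<in>N. g = b [^] i \<otimes> n)"
    and rep: "\<And>g. g \<in> carrier G \<Longrightarrow> \<exists>(i::int) (j::int). \<exists>n\<in>N. g = a [^] i \<otimes> z [^] j \<otimes> n"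
  shows "\<not>(\<exists>i::int. \<exists>n\<in>N. z = a [^] i \<otimes> n)"
proof
  assume "\<exists>i::int. \<exists>n\<in>N. z = a [^] i \<otimes> n"
  then obtain i0 :: int and n0 where n0: "n0 \<in> N" "z = a [^] i0 \<otimes> n0" by blast
  have n0G: "n0 \<in> carrier G" using N n0(1) by (meson subgroup.mem_carrier)
  have "\<exists>i::int. \<exists>n\<in>N. g = a [^] i \<otimes> n" if g: "g \<in> carrier G" for g
  proof -
    obtain i j :: int and n where n: "n \<in> N" "g = a [^] i \<otimes> z [^] j \<otimes> n" using rep[OF g] by blast
    have nG: "n \<in> carrier G" using N n(1) by (meson subgroup.mem_carrier)
    have "g = a [^] i \<otimes> (a [^] (i0 * j) \<otimes> n0 [^] j) \<otimes> n"
      using n(2) n0(2) pair_pow[OF a n0G] by simp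
    also have "\<dots> = a [^] (i + i0 * j) \<otimes> (n0 [^] j \<otimes> n)"
      using a n0G nG by (simp add: int_pow_mult m_ac)
    finally have "g = a [^] (i + i0 * j) \<otimes> (n0 [^] j \<otimes> n)" .
    moreover have "n0 [^] j \<otimes> n \<in> N" using N n0(1) n(1)
      by (simp add: subgroup.m_closed subgroup_int_pow_closed)
    ultimately show ?thesis by blast
  qed
  then show False using notcyc a by blast
qed

lemma key_C:
  assumes N: "subgroup N G" and a: "a \<in> carrier G" and z: "z \<in> carrier G"
    and q: "Factorial_Ring.prime (q::int)" and zq: "z [^] q \<in> N"
    and notcyc: "\<not>(\<exists>b\<in>carrier G. \<forall>g\<in>carrier G. \<exists>i::int. \<exists>n\<in>N. g = b [^] i \<otimes> n)"
    and rep: "\<And>g. g \<in> carrier G \<Longrightarrow> \<exists>(i::int) (j::int). \<exists>n\<in>N. g = a [^] i \<otimes> z [^] j \<otimes> n"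
    and ai: "a [^] (i::int) \<in> N"
  shows "q dvd i"
proof (rule ccontr)
  assume "\<not> q dvd i"
  then have "coprime q i" using q by (simp add: prime_imp_coprime)
  then have "gcd i q = 1" by (metis coprime_iff_gcd_eq_1 gcd.commute)
  then obtain u v where uv: "u * i + v * q = 1" using bezout_int[of i q] by auto
  define b where "b = a \<otimes> z"
  have b: "b \<in> carrier G" unfolding b_def using a z by simp
  define n0 where "n0 = inv ((a [^] i) [^] u) \<otimes> (z [^] q) [^] v"
  have n0N: "n0 \<in> N" unfolding n0_def using N ai zq
    by (simp add: subgroup.m_closed subgroup.m_inv_closed subgroup_int_pow_closed)
  have n0G: "n0 \<in> carrier G" using N n0N by (meson subgroup.mem_carrier)
  have zb: "z = b [^] (i * u) \<otimes> n0"
  proof -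
    have "b [^] (i * u) \<otimes> n0 = a [^] (i*u) \<otimes> z [^] (i*u) \<otimes> (inv (a [^] (i*u)) \<otimes> z [^] (q*v))"
      unfolding b_def n0_def using a z by (simp add: int_pow_distrib int_pow_pow)
    also have "\<dots> = z [^] (i*u) \<otimes> z [^] (q*v)"
      using a z by (simp add: cancel3)
    also have "\<dots> = z [^] (u * i + v * q)"
      using a z by (simp add: int_pow_mult[symmetric] mult.commute)
    also have "\<dots> = z" using z by (simp only: uv int_pow_1)
    finally show ?thesis by simp
  qed
  have ab: "a = b [^] (1 + - (i * u)) \<otimes> (\<one> \<otimes> inv n0)"
  proof -
    have "a = b \<otimes> inv z" unfolding b_def using a z by (simp add: m_assoc)
    also have "\<dots> = (b [^] (1::int) \<otimes> \<one>) \<otimes> (b [^] (- (i * u)) \<otimes> inv n0)"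
      using zb pair_inv[OF b n0G] b by simp
    also have "\<dots> = b [^] (1 + - (i * u)) \<otimes> (\<one> \<otimes> inv n0)"
      by (rule pair_mult[OF b one_closed inv_closed[OF n0G]])
    finally show ?thesis .
  qed
  have "\<exists>e::int. \<exists>n\<in>N. g = b [^] e \<otimes> n" if g: "g \<in> carrier G" for g
  proof -
    obtain s t :: int and n where n: "n \<in> N" "g = a [^] s \<otimes> z [^] t \<otimes> n" using rep[OF g] by blast
    have nG: "n \<in> carrier G" using N n(1) by (meson subgroup.mem_carrier)
    have i0G: "\<one> \<otimes> inv n0 \<in> carrier G" using n0G by simp
    have "g = (b [^] ((1 + - (i * u)) * s) \<otimes> (\<one> \<otimes> inv n0) [^] s) \<otimes> (b [^] ((i * u) * t) \<otimes> n0 [^] t) \<otimes> n"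
      using n(2) pair_pow[OF b i0G] pair_pow[OF b n0G] ab zb by metis
    also have "\<dots> = b [^] ((1 + - (i * u)) * s + (i * u) * t) \<otimes> ((\<one> \<otimes> inv n0) [^] s \<otimes> n0 [^] t \<otimes> n)"
      using pair_mult b i0G n0G nG by (simp add: m_assoc)
    finally have "g = b [^] ((1 + - (i * u)) * s + (i * u) * t) \<otimes> ((\<one> \<otimes> inv n0) [^] s \<otimes> n0 [^] t \<otimes> n)" .
    moreover have "(\<one> \<otimes> inv n0) [^] s \<otimes> n0 [^] t \<otimes> n \<in> N"
      using N n0N n(1) n0G by (simp add: subgroup.m_closed subgroup.m_inv_closed subgroup_int_pow_closed)
    ultimately show ?thesis by blast
  qed
  then show False using notcyc b by blast
qed


lemma main_ind:
  assumes fin: "finite (carrier G)"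
  shows "subgroup N G \<Longrightarrow> \<not>(\<exists>b\<in>carrier G. \<forall>g\<in>carrier G. \<exists>i::int. \<exists>n\<in>N. g = b [^] i \<otimes> n)
         \<Longrightarrow> chars_ok G"
proof (induction "card (carrier G) - card N" arbitrary: N rule: less_induct)
  case less
  note N = less.prems(1) and notcyc = less.prems(2)
  have NG: "N \<subseteq> carrier G" using N by (meson subgroup.subset)
  have "N \<noteq> carrier G"
  proof
    assume "N = carrier G"
    then have "\<forall>g\<in>carrier G. \<exists>i::int. \<exists>n\<in>N. g = \<one> [^] i \<otimes> n" by force
    then show False using notcyc by blast
  qed
  then obtain w where w: "w \<in> carrier G" "w \<notin> N" using NG by blast
  have ex: "\<exists>k::nat. 0 < k \<and> w [^] k \<in> N"
  proof (intro exI conjI)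
    show "0 < order G" using fin one_closed unfolding order_def by (auto simp add: card_gt_0_iff)
    show "w [^] order G \<in> N" using w(1) pow_order_eq_1 N by (simp add: subgroup.one_closed)
  qed
  define k0 where "k0 = (LEAST k::nat. 0 < k \<and> w [^] k \<in> N)"
  have k0: "0 < k0" "w [^] k0 \<in> N" using LeastI_ex[OF ex] unfolding k0_def by auto
  have k0min: "\<And>k. 0 < k \<Longrightarrow> k < k0 \<Longrightarrow> w [^] k \<notin> N"
    unfolding k0_def using not_less_Least by blast
  have "k0 \<noteq> 1" using k0 w by auto
  then obtain q :: nat where q: "Factorial_Ring.prime q" "q dvd k0" using prime_factor_nat by blast
  then obtain r where r: "k0 = q * r" by (auto elim: dvdE)
  have q2: "q \<ge> 2" using q(1) by (simp add: prime_ge_2_nat)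
  have r0: "0 < r" using r k0(1) by (cases r) auto
  have rk: "r < k0" using r q2 r0 by (simp add: less_le_trans[of r "2 * r"] mult_le_mono1)
  define z where "z = w [^] r"
  have zG: "z \<in> carrier G" unfolding z_def using w by simp
  have zN: "z \<notin> N" unfolding z_def using k0min r0 rk by blast
  have zqN: "z [^] (int q) \<in> N"
    unfolding z_def using k0(2) r w(1) by (simp add: int_pow_int nat_pow_pow mult.commute)
  have qp: "Factorial_Ring.prime (int q)" using q(1) by simp
  define N' where "N' = {x. \<exists>j::int. \<exists>n\<in>N. x = z [^] j \<otimes> n}"
  have N'G: "N' \<subseteq> carrier G" unfolding N'_def using NG zG by auto
  have N': "subgroup N' G"
  proof (rule subgroupI)
    show "N' \<subseteq> carrier G" by (fact N'G)
    show "N' \<noteq> {}" unfolding N'_def using N by (auto intro: subgroup.one_closed)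
  next
    fix x assume "x \<in> N'"
    then obtain j :: int and n where n: "n \<in> N" "x = z [^] j \<otimes> n" unfolding N'_def by blast
    then have "inv x = z [^] (- j) \<otimes> inv n" using pair_inv zG NG by auto
    then show "inv x \<in> N'" unfolding N'_def using n(1) N by (auto intro: subgroup.m_inv_closed)
  next
    fix x y assume "x \<in> N'" "y \<in> N'"
    then obtain j j' :: int and n n' where n: "n \<in> N" "x = z [^] j \<otimes> n" "n' \<in> N" "y = z [^] j' \<otimes> n'"
      unfolding N'_def by blast
    then have "x \<otimes> y = z [^] (j + j') \<otimes> (n \<otimes> n')" using pair_mult[OF zG, of n n' j j'] NG by auto
    then show "x \<otimes> y \<in> N'" unfolding N'_def using n(1,3) N by (auto intro: subgroup.m_closed)
  qed
  have NN': "N \<subset> N'"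
  proof
    show "N \<subseteq> N'"
    proof
      fix n assume nN: "n \<in> N"
      then have "n = z [^] (0::int) \<otimes> n" using NG by auto
      then show "n \<in> N'" unfolding N'_def using nN by blast
    qed
    have "z = z [^] (1::int) \<otimes> \<one>" using zG by simp
    then have "z \<in> N'" unfolding N'_def using N by (auto intro: subgroup.one_closed)
    then show "N \<noteq> N'" using zN by blast
  qed
  have cardlt: "card N < card N'" using NN' N'G fin by (meson psubset_card_mono rev_finite_subset)
  have cardle: "card N' \<le> card (carrier G)" using N'G fin by (simp add: card_mono)
  show ?case
  proof (cases "\<exists>b\<in>carrier G. \<forall>g\<in>carrier G. \<exists>i::int. \<exists>n\<in>N'. g = b [^] i \<otimes> n")
    case False
    show ?thesis
      by (rule less.hyps[OF _ N' False]) (use cardlt cardle in linarith)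
  next
    case True
    then obtain a where a: "a \<in> carrier G" and ca: "\<forall>g\<in>carrier G. \<exists>i::int. \<exists>n\<in>N'. g = a [^] i \<otimes> n"
      by blast
    have rep: "\<exists>(i::int) (j::int). \<exists>n\<in>N. g = a [^] i \<otimes> z [^] j \<otimes> n" if g: "g \<in> carrier G" for g
    proof -
      obtain i :: int and n' where "n' \<in> N'" "g = a [^] i \<otimes> n'" using ca g by blast
      then obtain j :: int and n where n: "n \<in> N" "g = a [^] i \<otimes> (z [^] j \<otimes> n)" unfolding N'_def by blast
      then have "g = a [^] i \<otimes> z [^] j \<otimes> n" using a zG NG by (auto simp: m_assoc)
      then show ?thesis using n(1) by blast
    qed
    have notA: "\<not>(\<exists>i::int. \<exists>n\<in>N. z = a [^] i \<otimes> n)"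
      by (rule key_A[OF N a zG notcyc rep])
    have notC: "\<And>i::int. a [^] i \<in> N \<Longrightarrow> int q dvd i"
      by (rule key_C[OF N a zG qp zqN notcyc rep])
    show ?thesis by (rule key_chars[OF N a zG qp zqN notA notC rep])
  qed
qed

lemma noncyclic_chars:
  assumes fin: "finite (carrier G)" and nc: "\<not> cyclic_group G"
  shows "chars_ok G"
proof (rule main_ind[OF fin triv_subgroup])
  show "\<not>(\<exists>b\<in>carrier G. \<forall>g\<in>carrier G. \<exists>i::int. \<exists>n\<in>{\<one>}. g = b [^] i \<otimes> n)"
  proof
    assume "\<exists>b\<in>carrier G. \<forall>g\<in>carrier G. \<exists>i::int. \<exists>n\<in>{\<one>}. g = b [^] i \<otimes> n"
    then obtain b where b: "b \<in> carrier G" "\<forall>g\<in>carrier G. \<exists>i::int. g = b [^] i" by auto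
    then have "carrier G = range (\<lambda>n::int. b [^] n)" by auto
    then have "cyclic_group G" using b(1) cyclic_group by blast
    then show False using nc by blast
  qed
qed

end


lemma mod_inner:
  fixes q :: int
  shows "(a + Y mod q + Z) mod q = (a + Y + Z) mod q"
proof -
  have "(a + Y mod q + Z) mod q = (Y mod q + (a + Z)) mod q" by (simp add: ac_simps)
  also have "\<dots> = (Y + (a + Z)) mod q" by (rule mod_add_left_eq)
  also have "\<dots> = (a + Y + Z) mod q" by (simp add: ac_simps)
  finally show ?thesis .
qed

lemma assoc_int:
  fixes q :: int
  assumes P: "P mod q = (p1 + p2) mod q" and S: "S mod q = (s1 + s2) mod q"
  shows "((a + b + p1*s1) mod q + c + P*s2) mod q = (a + (b + c + p2*s2) mod q + p1*S) mod q"
proof -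
  have "((a + b + p1*s1) mod q + c + P*s2) mod q = (0 + (a + b + p1*s1) + c + P*s2) mod q"
    using mod_inner[of 0 "a + b + p1*s1" q "c + P*s2"] by (simp add: ac_simps)
  also have "\<dots> = (a + b + p1*s1 + c + P*s2) mod q" by simp
  also have "\<dots> = (a + b + p1*s1 + c + (p1+p2)*s2) mod q"
    using mod_add_cong[OF refl mod_mult_cong[OF P refl]] by blast
  also have "\<dots> = (a + (b + c + p2*s2) + p1*(s1+s2)) mod q"
    by (simp add: algebra_simps)
  also have "\<dots> = (a + (b + c + p2*s2) + p1*S) mod q"
    using mod_add_cong[OF refl mod_mult_cong[OF refl S[symmetric]]] by blast
  also have "\<dots> = (a + (b + c + p2*s2) mod q + p1*S) mod q"
    by (rule mod_inner[symmetric])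
  finally show ?thesis .
qed


lemma mod_zero_prod:
  fixes q :: int
  assumes "x mod q = 0"
  shows "(a + x * y) mod q = a mod q" "(a + y * x) mod q = a mod q"
proof -
  have xy: "(x * y) mod q = 0"
  proof -
    have "(x * y) mod q = ((x mod q) * y) mod q" by (simp add: mod_mult_left_eq)
    then show ?thesis using assms by simp
  qed
  have "(a + x * y) mod q = (a + (x * y) mod q) mod q" by (simp add: mod_add_right_eq)
  then show "(a + x * y) mod q = a mod q" using xy by simp
  then show "(a + y * x) mod q = a mod q" by (simp add: mult.commute)
qed

lemma (in group) comm_aux:
  assumes "u \<in> carrier G" "v \<in> carrier G"
  shows "(u \<otimes> v \<otimes> inv u \<otimes> inv v) \<otimes> (v \<otimes> u) = u \<otimes> v"
proof -
  have e1: "inv v \<otimes> (v \<otimes> u) = u" using assms by (simp add: m_assoc[symmetric])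
  show ?thesis using assms by (simp add: m_assoc e1)
qed

lemma heis:
  fixes G :: "'a monoid"
  assumes G: "comm_group G" and fin: "finite (carrier G)" and co: "chars_ok G"
  shows "\<exists>(E :: ('a \<times> int) monoid) \<pi>. stem_extension G E \<pi> \<and> finite (carrier E) \<and>
           card (carrier G) < card (carrier E)"
proof -
  interpret G: comm_group G by (fact G)
  obtain q \<phi> \<psi> x y where all: "(q::int) > 1 \<and> x \<in> carrier G \<and> y \<in> carrier G \<and>
   (\<forall>g\<in>carrier G. \<forall>h\<in>carrier G. \<phi> (g \<otimes>\<^bsub>G\<^esub> h) mod q = (\<phi> g + \<phi> h) mod q \<and>
        \<psi> (g \<otimes>\<^bsub>G\<^esub> h) mod q = (\<psi> g + \<psi> h) mod q) \<and>
   \<phi> x mod q = 1 \<and> \<psi> x mod q = 0 \<and> \<phi> y mod q = 0 \<and> \<psi> y mod q = 1"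
    using co unfolding chars_ok_def by (elim exE) (rule that)
  have q: "q > 1" and x: "x \<in> carrier G" and y: "y \<in> carrier G"
    and hom: "\<forall>g\<in>carrier G. \<forall>h\<in>carrier G. \<phi> (g \<otimes>\<^bsub>G\<^esub> h) mod q = (\<phi> g + \<phi> h) mod q \<and>
        \<psi> (g \<otimes>\<^bsub>G\<^esub> h) mod q = (\<psi> g + \<psi> h) mod q"
    and vx: "\<phi> x mod q = 1" "\<psi> x mod q = 0" and vy: "\<phi> y mod q = 0" "\<psi> y mod q = 1"
    using all by simp_all
  have hphi: "\<phi> (g \<otimes>\<^bsub>G\<^esub> h) mod q = (\<phi> g + \<phi> h) mod q" if "g \<in> carrier G" "h \<in> carrier G" for g h
    using hom that by blast
  have hpsi: "\<psi> (g \<otimes>\<^bsub>G\<^esub> h) mod q = (\<psi> g + \<psi> h) mod q" if "g \<in> carrier G" "h \<in> carrier G" for g h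
    using hom that by blast
  have phi1: "\<phi> \<one>\<^bsub>G\<^esub> mod q = 0"
  proof -
    have "\<phi> \<one>\<^bsub>G\<^esub> mod q = (\<phi> \<one>\<^bsub>G\<^esub> + \<phi> \<one>\<^bsub>G\<^esub>) mod q" using hphi[of "\<one>\<^bsub>G\<^esub>" "\<one>\<^bsub>G\<^esub>"] by simp
    then have "q dvd \<phi> \<one>\<^bsub>G\<^esub>" by (simp add: mod_eq_dvd_iff)
    then show ?thesis by simp
  qed
  have psi1: "\<psi> \<one>\<^bsub>G\<^esub> mod q = 0"
  proof -
    have "\<psi> \<one>\<^bsub>G\<^esub> mod q = (\<psi> \<one>\<^bsub>G\<^esub> + \<psi> \<one>\<^bsub>G\<^esub>) mod q" using hpsi[of "\<one>\<^bsub>G\<^esub>" "\<one>\<^bsub>G\<^esub>"] by simp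
    then have "q dvd \<psi> \<one>\<^bsub>G\<^esub>" by (simp add: mod_eq_dvd_iff)
    then show ?thesis by simp
  qed
  define E :: "('a \<times> int) monoid" where "E = \<lparr>carrier = carrier G \<times> {0..<q},
     monoid.mult = (\<lambda>u v. (fst u \<otimes>\<^bsub>G\<^esub> fst v, (snd u + snd v + \<phi> (fst u) * \<psi> (fst v)) mod q)),
     one = (\<one>\<^bsub>G\<^esub>, 0)\<rparr>"
  have cE: "carrier E = carrier G \<times> {0..<q}" unfolding E_def by simp
  have mE: "(g, a) \<otimes>\<^bsub>E\<^esub> (h, b) = (g \<otimes>\<^bsub>G\<^esub> h, (a + b + \<phi> g * \<psi> h) mod q)" for g h a b
    unfolding E_def by simp
  have oE: "\<one>\<^bsub>E\<^esub> = (\<one>\<^bsub>G\<^esub>, 0)" unfolding E_def by simp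
  have modin: "0 \<le> t mod q \<and> t mod q < q" for t using q by simp
  have grpE: "group E"
  proof (rule groupI)
    fix u v assume "u \<in> carrier E" "v \<in> carrier E"
    then show "u \<otimes>\<^bsub>E\<^esub> v \<in> carrier E" using modin by (auto simp: cE mE)
  next
    show "\<one>\<^bsub>E\<^esub> \<in> carrier E" using q by (simp add: cE oE)
  next
    fix u v w assume "u \<in> carrier E" "v \<in> carrier E" "w \<in> carrier E"
    then obtain g a h b k c where u: "u = (g, a)" "g \<in> carrier G" and v: "v = (h, b)" "h \<in> carrier G"
      and w: "w = (k, c)" "k \<in> carrier G" by (auto simp: cE)
    have "((a + b + \<phi> g * \<psi> h) mod q + c + \<phi> (g \<otimes>\<^bsub>G\<^esub> h) * \<psi> k) mod q
        = (a + (b + c + \<phi> h * \<psi> k) mod q + \<phi> g * \<psi> (h \<otimes>\<^bsub>G\<^esub> k)) mod q"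
      by (rule assoc_int[OF hphi[OF u(2) v(2)] hpsi[OF v(2) w(2)]])
    then show "u \<otimes>\<^bsub>E\<^esub> v \<otimes>\<^bsub>E\<^esub> w = u \<otimes>\<^bsub>E\<^esub> (v \<otimes>\<^bsub>E\<^esub> w)"
      using u v w by (simp add: mE G.m_assoc)
  next
    fix u assume "u \<in> carrier E"
    then obtain g a where u: "u = (g, a)" "g \<in> carrier G" "0 \<le> a" "a < q" by (auto simp: cE)
    have "(0 + a + \<phi> \<one>\<^bsub>G\<^esub> * \<psi> g) mod q = a mod q" using mod_zero_prod(1)[OF phi1] by simp
    then show "\<one>\<^bsub>E\<^esub> \<otimes>\<^bsub>E\<^esub> u = u" using u by (simp add: oE mE)
  next
    fix u assume "u \<in> carrier E"
    then obtain g a where u: "u = (g, a)" "g \<in> carrier G" "0 \<le> a" "a < q" by (auto simp: cE)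
    define c where "c = (- (a + \<phi> (inv\<^bsub>G\<^esub> g) * \<psi> g)) mod q"
    have "(c + a + \<phi> (inv\<^bsub>G\<^esub> g) * \<psi> g) mod q = 0"
    proof -
      have "(c + a + \<phi> (inv\<^bsub>G\<^esub> g) * \<psi> g) mod q = (c + (a + \<phi> (inv\<^bsub>G\<^esub> g) * \<psi> g)) mod q"
        by (simp add: add.assoc)
      also have "\<dots> = (- (a + \<phi> (inv\<^bsub>G\<^esub> g) * \<psi> g) + (a + \<phi> (inv\<^bsub>G\<^esub> g) * \<psi> g)) mod q"
        unfolding c_def by (rule mod_add_left_eq)
      finally show ?thesis by simp
    qed
    then have "(inv\<^bsub>G\<^esub> g, c) \<otimes>\<^bsub>E\<^esub> u = \<one>\<^bsub>E\<^esub>" using u by (simp add: mE oE)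
    moreover have "(inv\<^bsub>G\<^esub> g, c) \<in> carrier E" using u modin unfolding c_def by (simp add: cE)
    ultimately show "\<exists>v\<in>carrier E. v \<otimes>\<^bsub>E\<^esub> u = \<one>\<^bsub>E\<^esub>" by blast
  qed
  interpret E: group E by (fact grpE)
  have c1E: "(\<one>\<^bsub>G\<^esub>, 1) \<in> carrier E" using q by (simp add: cE)
  have central: "(\<one>\<^bsub>G\<^esub>, a) \<otimes>\<^bsub>E\<^esub> w = w \<otimes>\<^bsub>E\<^esub> (\<one>\<^bsub>G\<^esub>, a)" if w: "w \<in> carrier E" for a w
  proof -
    obtain h b where hb: "w = (h, b)" "h \<in> carrier G" using w by (auto simp: cE)
    have "(a + b + \<phi> \<one>\<^bsub>G\<^esub> * \<psi> h) mod q = (a + b) mod q" by (rule mod_zero_prod(1)[OF phi1])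
    moreover have "(b + a + \<phi> h * \<psi> \<one>\<^bsub>G\<^esub>) mod q = (b + a) mod q" by (rule mod_zero_prod(2)[OF psi1])
    ultimately show ?thesis using hb by (simp add: mE add.commute)
  qed
  have homE: "fst \<in> hom E G"
  proof (rule homI)
    fix u assume "u \<in> carrier E" then show "fst u \<in> carrier G" by (auto simp: cE)
  next
    fix u v assume "u \<in> carrier E" "v \<in> carrier E"
    then show "fst (u \<otimes>\<^bsub>E\<^esub> v) = fst u \<otimes>\<^bsub>G\<^esub> fst v" by (cases u, cases v) (simp add: mE)
  qed
  have imgE: "fst ` carrier E = carrier G"
  proof
    show "fst ` carrier E \<subseteq> carrier G" by (auto simp: cE)
  next
    show "carrier G \<subseteq> fst ` carrier E"
    proof
      fix g assume g: "g \<in> carrier G"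
      then have "(g, 0) \<in> carrier E" using q by (simp add: cE)
      then show "g \<in> fst ` carrier E" by (rule image_eqI[rotated]) simp
    qed
  qed
  have pw: "c1 [^]\<^bsub>E\<^esub> (n::nat) = (\<one>\<^bsub>G\<^esub>, int n mod q)" if "c1 = (\<one>\<^bsub>G\<^esub>, 1)" for c1 n
  proof (induction n)
    case 0
    then show ?case by (simp add: oE)
  next
    case (Suc n)
    have "(int n mod q + 1 + \<phi> \<one>\<^bsub>G\<^esub> * \<psi> \<one>\<^bsub>G\<^esub>) mod q = (int n mod q + 1) mod q"
      by (rule mod_zero_prod(1)[OF phi1])
    also have "\<dots> = (int n + 1) mod q" by (rule mod_add_left_eq)
    finally show ?case using Suc that by (simp add: mE add.commute)
  qed
  define u0 where "u0 = (x, 0::int)"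
  define v0 where "v0 = (y, 0::int)"
  have u0E: "u0 \<in> carrier E" and v0E: "v0 \<in> carrier E" using q x y by (simp_all add: cE u0_def v0_def)
  have "(\<phi> x * \<psi> y) mod q = ((\<phi> x mod q) * (\<psi> y mod q)) mod q" by (simp add: mod_mult_eq)
  then have xy1: "(\<phi> x * \<psi> y) mod q = 1" using vx vy q by simp
  have "(\<phi> y * \<psi> x) mod q = ((\<phi> y mod q) * \<psi> x) mod q" by (simp add: mod_mult_left_eq)
  then have yx0: "(\<phi> y * \<psi> x) mod q = 0" using vy by simp
  have "(1 + \<phi> (y \<otimes>\<^bsub>G\<^esub> x) * \<psi> \<one>\<^bsub>G\<^esub>) mod q = 1 mod q" by (rule mod_zero_prod(2)[OF psi1])
  then have r1: "(1 + \<phi> (y \<otimes>\<^bsub>G\<^esub> x) * \<psi> \<one>\<^bsub>G\<^esub>) mod q = 1" using q by simp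
  have uv: "u0 \<otimes>\<^bsub>E\<^esub> v0 = (v0 \<otimes>\<^bsub>E\<^esub> u0) \<otimes>\<^bsub>E\<^esub> (\<one>\<^bsub>G\<^esub>, 1)"
    using xy1 yx0 r1 x y by (simp add: u0_def v0_def mE G.m_comm)
  define d where "d = u0 \<otimes>\<^bsub>E\<^esub> v0 \<otimes>\<^bsub>E\<^esub> inv\<^bsub>E\<^esub> u0 \<otimes>\<^bsub>E\<^esub> inv\<^bsub>E\<^esub> v0"
  have dset: "d \<in> derived_set E (carrier E)" unfolding d_def using u0E v0E by blast
  have dE: "d \<in> carrier E" unfolding d_def using u0E v0E by simp
  have "d \<otimes>\<^bsub>E\<^esub> (v0 \<otimes>\<^bsub>E\<^esub> u0) = (\<one>\<^bsub>G\<^esub>, 1) \<otimes>\<^bsub>E\<^esub> (v0 \<otimes>\<^bsub>E\<^esub> u0)"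
    unfolding d_def using E.comm_aux[OF u0E v0E] uv central[of "v0 \<otimes>\<^bsub>E\<^esub> u0" 1] u0E v0E by simp
  then have dc: "d = (\<one>\<^bsub>G\<^esub>, 1)" using dE c1E u0E v0E by simp
  have c1D: "(\<one>\<^bsub>G\<^esub>, 1) \<in> derived E (carrier E)"
    using dset dc unfolding derived_def by (auto intro: generate.incl)
  have subD: "subgroup (derived E (carrier E)) E" by (rule E.derived_is_subgroup) simp
  have kerE: "kernel E G fst \<subseteq> group_center E \<inter> derived E (carrier E)"
  proof
    fix u assume u: "u \<in> kernel E G fst"
    then obtain a where ua: "u = (\<one>\<^bsub>G\<^esub>, a)" "0 \<le> a" "a < q" unfolding kernel_def by (auto simp: cE)
    have uE: "u \<in> carrier E" using u unfolding kernel_def by simp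
    have "u \<in> group_center E" unfolding group_center_def using uE ua(1) central by simp
    moreover have "u = (\<one>\<^bsub>G\<^esub>, 1) [^]\<^bsub>E\<^esub> (int (nat a))"
      using pw[of "(\<one>\<^bsub>G\<^esub>, 1)" "nat a"] ua by (simp add: int_pow_int)
    then have "u \<in> derived E (carrier E)" using E.subgroup_int_pow_closed[OF subD c1D] by simp
    ultimately show "u \<in> group_center E \<inter> derived E (carrier E)" by simp
  qed
  have finE: "finite (carrier E)" using fin by (simp add: cE)
  have cardG: "card (carrier G) > 0" using fin G.one_closed by (auto simp: card_gt_0_iff)
  have "card (carrier E) = card (carrier G) * nat q" by (simp add: cE card_cartesian_product)
  then have cardlt: "card (carrier G) < card (carrier E)" using cardG q by simp
  have "stem_extension G E fst" unfolding stem_extension_def using grpE homE imgE kerE by simp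
  then show ?thesis using finE cardlt by blast
qed



lemma transport:
  fixes G :: "'a monoid" and E :: "'c monoid"
  assumes st: "stem_extension G E \<pi>" and finE: "finite (carrier E)"
  shows "\<exists>(H' :: nat monoid) f'. stem_extension G H' f' \<and> card (carrier H') = card (carrier E)"
proof -
  have grpE: "group E" and homp: "\<pi> \<in> hom E G" and imgp: "\<pi> ` carrier E = carrier G"
    and kerp: "kernel E G \<pi> \<subseteq> group_center E \<inter> derived E (carrier E)"
    using st unfolding stem_extension_def by auto
  interpret E: group E by (fact grpE)
  obtain h :: "'c \<Rightarrow> nat" where bh: "bij_betw h (carrier E) {0..<card (carrier E)}"
    using ex_bij_betw_finite_nat[OF finE] by blast
  have inj: "inj_on h (carrier E)" using bh by (simp add: bij_betw_def)
  define k where "k = inv_into (carrier E) h"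
  have kh [simp]: "k (h z) = z" if "z \<in> carrier E" for z
    unfolding k_def using inj that by simp
  have hk [simp]: "h (k a) = a" if "a \<in> h ` carrier E" for a
    unfolding k_def using that by (simp add: f_inv_into_f)
  have kE [simp]: "k a \<in> carrier E" if "a \<in> h ` carrier E" for a
    unfolding k_def using that by (simp add: inv_into_into)
  define H' :: "nat monoid" where "H' = \<lparr>carrier = h ` carrier E,
     monoid.mult = (\<lambda>a b. h (k a \<otimes>\<^bsub>E\<^esub> k b)), one = h \<one>\<^bsub>E\<^esub>\<rparr>"
  have cH [simp]: "carrier H' = h ` carrier E" unfolding H'_def by simp
  have mH [simp]: "a \<otimes>\<^bsub>H'\<^esub> b = h (k a \<otimes>\<^bsub>E\<^esub> k b)" for a b unfolding H'_def by simp
  have oH [simp]: "\<one>\<^bsub>H'\<^esub> = h \<one>\<^bsub>E\<^esub>" unfolding H'_def by simp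
  have grpH: "group H'"
  proof (rule groupI)
    fix a b assume "a \<in> carrier H'" "b \<in> carrier H'"
    then show "a \<otimes>\<^bsub>H'\<^esub> b \<in> carrier H'" by simp
  next
    show "\<one>\<^bsub>H'\<^esub> \<in> carrier H'" by simp
  next
    fix a b c assume "a \<in> carrier H'" "b \<in> carrier H'" "c \<in> carrier H'"
    then show "a \<otimes>\<^bsub>H'\<^esub> b \<otimes>\<^bsub>H'\<^esub> c = a \<otimes>\<^bsub>H'\<^esub> (b \<otimes>\<^bsub>H'\<^esub> c)"
      by (simp add: E.m_assoc)
  next
    fix a assume "a \<in> carrier H'"
    then show "\<one>\<^bsub>H'\<^esub> \<otimes>\<^bsub>H'\<^esub> a = a" by simp
  next
    fix a assume a: "a \<in> carrier H'"
    have "h (inv\<^bsub>E\<^esub> (k a)) \<in> carrier H'" using a by simp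
    moreover have "h (inv\<^bsub>E\<^esub> (k a)) \<otimes>\<^bsub>H'\<^esub> a = \<one>\<^bsub>H'\<^esub>" using a by simp
    ultimately show "\<exists>b\<in>carrier H'. b \<otimes>\<^bsub>H'\<^esub> a = \<one>\<^bsub>H'\<^esub>" by blast
  qed
  interpret H: group H' by (fact grpH)
  have hhom: "h \<in> hom E H'" by (rule homI) simp_all
  have gh: "group_hom E H' h" unfolding group_hom_def group_hom_axioms_def using grpE grpH hhom by simp
  define f' where "f' = \<pi> \<circ> k"
  have homf: "f' \<in> hom H' G"
  proof (rule homI)
    fix a assume "a \<in> carrier H'" then show "f' a \<in> carrier G"
      unfolding f'_def using homp by (simp add: hom_in_carrier)
  next
    fix a b assume "a \<in> carrier H'" "b \<in> carrier H'"
    then show "f' (a \<otimes>\<^bsub>H'\<^esub> b) = f' a \<otimes>\<^bsub>G\<^esub> f' b"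
      unfolding f'_def using homp by (simp add: hom_mult)
  qed
  have imgf: "f' ` carrier H' = carrier G"
    unfolding f'_def using imgp by (simp add: image_comp[symmetric] image_image)
  have kerf: "kernel H' G f' \<subseteq> group_center H' \<inter> derived H' (carrier H')"
  proof
    fix a assume a: "a \<in> kernel H' G f'"
    then have aH: "a \<in> h ` carrier E" and fa: "\<pi> (k a) = \<one>\<^bsub>G\<^esub>"
      unfolding kernel_def f'_def by auto
    have "k a \<in> kernel E G \<pi>" unfolding kernel_def using aH fa by simp
    then have kc: "k a \<in> group_center E" and kd: "k a \<in> derived E (carrier E)" using kerp by auto
    have "a \<in> group_center H'"
      unfolding group_center_def using aH kc unfolding group_center_def by auto
    moreover have "a \<in> derived H' (carrier H')"
    proof -
      have "derived H' (h ` carrier E) = h ` derived E (carrier E)"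
        by (rule group_hom.derived_img[OF gh]) simp
      moreover have "a = h (k a)" using aH by simp
      ultimately show ?thesis using kd by simp
    qed
    ultimately show "a \<in> group_center H' \<inter> derived H' (carrier H')" by simp
  qed
  have "stem_extension G H' f'" unfolding stem_extension_def using grpH homf imgf kerf by simp
  moreover have "card (carrier H') = card (carrier E)" using inj by (simp add: card_image)
  ultimately show ?thesis by blast
qed


lemma central_comm:
  assumes grp: "group H" and x: "x \<in> carrier H" and y: "y \<in> carrier H"
    and c1: "c1 \<in> group_center H" and c2: "c2 \<in> group_center H"
    and xy: "x \<otimes>\<^bsub>H\<^esub> y = y \<otimes>\<^bsub>H\<^esub> x"
  shows "(x \<otimes>\<^bsub>H\<^esub> c1) \<otimes>\<^bsub>H\<^esub> (y \<otimes>\<^bsub>H\<^esub> c2) = (y \<otimes>\<^bsub>H\<^esub> c2) \<otimes>\<^bsub>H\<^esub> (x \<otimes>\<^bsub>H\<^esub> c1)"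
proof -
  interpret H: group H by (fact grp)
  have c1H: "c1 \<in> carrier H" and c2H: "c2 \<in> carrier H"
    and c1c: "\<And>h. h \<in> carrier H \<Longrightarrow> c1 \<otimes>\<^bsub>H\<^esub> h = h \<otimes>\<^bsub>H\<^esub> c1"
    and c2c: "\<And>h. h \<in> carrier H \<Longrightarrow> c2 \<otimes>\<^bsub>H\<^esub> h = h \<otimes>\<^bsub>H\<^esub> c2"
    using c1 c2 unfolding group_center_def by auto
  have "(x \<otimes>\<^bsub>H\<^esub> c1) \<otimes>\<^bsub>H\<^esub> (y \<otimes>\<^bsub>H\<^esub> c2) = x \<otimes>\<^bsub>H\<^esub> (c1 \<otimes>\<^bsub>H\<^esub> y) \<otimes>\<^bsub>H\<^esub> c2"
    using x y c1H c2H by (simp add: H.m_assoc)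
  also have "\<dots> = (x \<otimes>\<^bsub>H\<^esub> y) \<otimes>\<^bsub>H\<^esub> (c1 \<otimes>\<^bsub>H\<^esub> c2)"
    using x y c1H c2H c1c[OF y] by (simp add: H.m_assoc)
  also have "\<dots> = (y \<otimes>\<^bsub>H\<^esub> x) \<otimes>\<^bsub>H\<^esub> (c2 \<otimes>\<^bsub>H\<^esub> c1)"
    using xy c1c[OF c2H] by simp
  also have "\<dots> = y \<otimes>\<^bsub>H\<^esub> (c2 \<otimes>\<^bsub>H\<^esub> x) \<otimes>\<^bsub>H\<^esub> c1"
    using x y c1H c2H c2c[OF x] by (simp add: H.m_assoc)
  also have "\<dots> = (y \<otimes>\<^bsub>H\<^esub> c2) \<otimes>\<^bsub>H\<^esub> (x \<otimes>\<^bsub>H\<^esub> c1)"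
    using x y c1H c2H by (simp add: H.m_assoc)
  finally show ?thesis .
qed

theorem theorem3p3:
  fixes G :: "'a monoid" and H :: "'b monoid" and f :: "'b \<Rightarrow> 'a"
  assumes "group G" and "finite (carrier G)" and "schur_cover G H f"
  shows "deep_commuting_graph_complete G H f \<longleftrightarrow> cyclic_group G"
proof -
  note grpG = assms(1) and finG = assms(2)
  have grpH: "group H" and homf: "f \<in> hom H G" and imgf: "f ` carrier H = carrier G"
    and kerf: "kernel H G f \<subseteq> group_center H \<inter> derived H (carrier H)"
    and finH: "finite (carrier H)"
    and maxH: "\<And>(H' :: nat monoid) f'. stem_extension G H' f' \<Longrightarrow> card (carrier H') \<le> card (carrier H)"
    using assms(3) unfolding schur_cover_def stem_extension_def by auto
  interpret G: group G by (fact grpG)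
  interpret H: group H by (fact grpH)
  interpret fh: group_hom H G f
    unfolding group_hom_def group_hom_axioms_def using grpG grpH homf by simp
  have kerC: "inv\<^bsub>H\<^esub> b \<otimes>\<^bsub>H\<^esub> a \<in> group_center H"
    if a: "a \<in> carrier H" and b: "b \<in> carrier H" and fab: "f a = f b" for a b
  proof -
    have "f (inv\<^bsub>H\<^esub> b \<otimes>\<^bsub>H\<^esub> a) = \<one>\<^bsub>G\<^esub>" using a b fab by simp
    then have "inv\<^bsub>H\<^esub> b \<otimes>\<^bsub>H\<^esub> a \<in> kernel H G f" unfolding kernel_def using a b by simp
    then show ?thesis using kerf by auto
  qed
  show ?thesis
  proof
    assume cpl: "deep_commuting_graph_complete G H f"
    have commH: "a \<otimes>\<^bsub>H\<^esub> b = b \<otimes>\<^bsub>H\<^esub> a" if a: "a \<in> carrier H" and b: "b \<in> carrier H" for a b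
    proof (cases "f a = f b")
      case False
      have "f a \<in> carrier G" "f b \<in> carrier G" using a b by simp_all
      then have "deep_commuting_adj G H f (f a) (f b)" using cpl False
        unfolding deep_commuting_graph_complete_def by blast
      then show ?thesis using a b unfolding deep_commuting_adj_def by blast
    next
      case True
      define c where "c = inv\<^bsub>H\<^esub> b \<otimes>\<^bsub>H\<^esub> a"
      have cc: "c \<in> group_center H" unfolding c_def using kerC a b True by simp
      have cH: "c \<in> carrier H" using a b unfolding c_def by simp
      have ab: "a = b \<otimes>\<^bsub>H\<^esub> c" unfolding c_def using a b by (simp add: H.m_assoc[symmetric])
      have "c \<otimes>\<^bsub>H\<^esub> b = b \<otimes>\<^bsub>H\<^esub> c" using cc b unfolding group_center_def by auto
      then show ?thesis using ab b cH by (simp add: H.m_assoc)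
    qed
    then have cgH: "comm_group H" by (rule H.group_comm_groupI)
    have derH: "derived H (carrier H) = {\<one>\<^bsub>H\<^esub>}"
      by (rule comm_group.derived_eq_singleton[OF cgH]) simp
    have injf: "inj_on f (carrier H)"
    proof (rule inj_onI)
      fix a b assume a: "a \<in> carrier H" and b: "b \<in> carrier H" and fab: "f a = f b"
      have "inv\<^bsub>H\<^esub> b \<otimes>\<^bsub>H\<^esub> a \<in> kernel H G f" unfolding kernel_def using a b fab by simp
      then have "inv\<^bsub>H\<^esub> b \<otimes>\<^bsub>H\<^esub> a = \<one>\<^bsub>H\<^esub>" using kerf derH by auto
      then show "a = b" using a b by (metis H.inv_closed H.inv_inv H.inv_equality H.m_closed)
    qed
    have cardHG: "card (carrier H) = card (carrier G)" using injf imgf by (metis card_image)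
    have cgG: "comm_group G"
    proof (rule G.group_comm_groupI)
      fix g g' assume g: "g \<in> carrier G" and g': "g' \<in> carrier G"
      then obtain a b where a: "a \<in> carrier H" "g = f a" and b: "b \<in> carrier H" "g' = f b"
        using imgf by (metis imageE)
      show "g \<otimes>\<^bsub>G\<^esub> g' = g' \<otimes>\<^bsub>G\<^esub> g" using a b commH[OF a(1) b(1)] by (metis fh.hom_mult)
    qed
    show "cyclic_group G"
    proof (rule ccontr)
      assume nc: "\<not> cyclic_group G"
      have "chars_ok G" by (rule comm_group.noncyclic_chars[OF cgG finG nc])
      then obtain E :: "('a \<times> int) monoid" and \<pi> where E: "stem_extension G E \<pi>" "finite (carrier E)"
        "card (carrier G) < card (carrier E)" using heis[OF cgG finG] by blast
      obtain H' :: "nat monoid" and f' where "stem_extension G H' f'" "card (carrier H') = card (carrier E)"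
        using transport[OF E(1) E(2)] by blast
      then have "card (carrier E) \<le> card (carrier H)" using maxH by metis
      then show False using E(3) cardHG by simp
    qed
  next
    assume cyc: "cyclic_group G"
    then obtain g where g: "g \<in> carrier G" and rg: "carrier G = range (\<lambda>n::int. g [^]\<^bsub>G\<^esub> n)"
      using G.cyclic_group by blast
    obtain a where a: "a \<in> carrier H" "f a = g" using g imgf by (metis imageE)
    have decomp: "\<exists>i::int. \<exists>c\<in>group_center H. u = a [^]\<^bsub>H\<^esub> i \<otimes>\<^bsub>H\<^esub> c" if u: "u \<in> carrier H" for u
    proof -
      have "f u \<in> carrier G" using u by simp
      then obtain i :: int where i: "f u = g [^]\<^bsub>G\<^esub> i" using rg by auto
      have fa: "f (a [^]\<^bsub>H\<^esub> i) = f u" using i a by (simp add: fh.hom_int_pow)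
      define c where "c = inv\<^bsub>H\<^esub> (a [^]\<^bsub>H\<^esub> i) \<otimes>\<^bsub>H\<^esub> u"
      have "c \<in> group_center H" unfolding c_def using kerC[of u "a [^]\<^bsub>H\<^esub> i"] u a fa by simp
      moreover have "u = a [^]\<^bsub>H\<^esub> i \<otimes>\<^bsub>H\<^esub> c" unfolding c_def using u a
        by (simp add: H.m_assoc[symmetric])
      ultimately show ?thesis by blast
    qed
    have commH: "u \<otimes>\<^bsub>H\<^esub> v = v \<otimes>\<^bsub>H\<^esub> u" if u: "u \<in> carrier H" and v: "v \<in> carrier H" for u v
    proof -
      obtain i :: int and c where c: "c \<in> group_center H" "u = a [^]\<^bsub>H\<^esub> i \<otimes>\<^bsub>H\<^esub> c" using decomp[OF u] by blast
      obtain j :: int and d where d: "d \<in> group_center H" "v = a [^]\<^bsub>H\<^esub> j \<otimes>\<^bsub>H\<^esub> d" using decomp[OF v] by blast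
      have "a [^]\<^bsub>H\<^esub> i \<otimes>\<^bsub>H\<^esub> a [^]\<^bsub>H\<^esub> j = a [^]\<^bsub>H\<^esub> j \<otimes>\<^bsub>H\<^esub> a [^]\<^bsub>H\<^esub> i"
        using a by (simp add: H.int_pow_mult[symmetric] add.commute)
      then show ?thesis using central_comm[OF grpH _ _ c(1) d(1)] c(2) d(2) a by simp
    qed
    show "deep_commuting_graph_complete G H f"
      unfolding deep_commuting_graph_complete_def deep_commuting_adj_def using commH by blast
  qed
qed

end
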